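(* Let $F:(0,\infty)\to(0,\infty)$ be strictly decreasing and let $(x_n)_{n\in\mathbb Z}$ be an equilibrium configuration for $F$ that is periodic, i.e. there are an integer $k\ge1$ and a real $t>0$ with $x_{n+k}=x_n+t$ for all $n\in\mathbb Z$. Then the configuration is trivial.
   Context: A force law is a strictly decreasing function $F:(0,\infty)\to(0,\infty)$; two particles at distance $d$ repel each other with force of magnitude $F(d)$. A configuration is a strictly increasing bi-infinite sequence $(x_n)_{n\in\mathbb Z}$ of reals. The particle at $x_n$ is in equilibrium if $\sum_{m<n}F(x_n-x_m)$ and $\sum_{m>n}F(x_m-x_n)$ are both finite and equal. An equilibrium configuration is a configuration in which every particle is in equilibrium. It is trivial if $x_{n+1}-x_n$ is constant. *)

theory Defs
  imports "HOL-Analysis.Analysis"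
begin

text \<open>Modelled as a total function real => real whose restriction to (0,inf) has
  positive values and is strictly decreasing; values outside (0,inf) are irrelevant.\<close>
definition force_law :: "(real \<Rightarrow> real) \<Rightarrow> bool" where
  "force_law F \<longleftrightarrow> (\<forall>d>0. F d > 0) \<and> (\<forall>d e. 0 < d \<longrightarrow> d < e \<longrightarrow> F e < F d)"

definition configuration :: "(int \<Rightarrow> real) \<Rightarrow> bool" where
  "configuration x \<longleftrightarrow> strict_mono x"

text \<open>Particle n is in equilibrium: both one-sided force sums are finite and equal.
  The terms are positive, so summability on the index set is the same as finiteness.\<close>
definition in_equilibrium :: "(real \<Rightarrow> real) \<Rightarrow> (int \<Rightarrow> real) \<Rightarrow> int \<Rightarrow> bool" where
  "in_equilibrium F x n \<longleftrightarrow>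
     (\<lambda>m. F (x n - x m)) summable_on {..<n} \<and>
     (\<lambda>m. F (x m - x n)) summable_on {n<..} \<and>
     (\<Sum>\<^sub>\<infinity>m\<in>{..<n}. F (x n - x m)) = (\<Sum>\<^sub>\<infinity>m\<in>{n<..}. F (x m - x n))"

definition equilibrium_configuration :: "(real \<Rightarrow> real) \<Rightarrow> (int \<Rightarrow> real) \<Rightarrow> bool" where
  "equilibrium_configuration F x \<longleftrightarrow> configuration x \<and> (\<forall>n. in_equilibrium F x n)"

definition trivial_configuration :: "(int \<Rightarrow> real) \<Rightarrow> bool" where
  "trivial_configuration x \<longleftrightarrow> (\<exists>c. \<forall>n. x (n + 1) - x n = c)"

end

theory Submission
  imports Defs
begin

lemma per_nat:
  assumes "\<forall>n. x (n + k) = x n + (t::real)"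
  shows "x (n + int q * k) = x n + real q * t"
proof (induction q)
  case 0 then show ?case by simp
next
  case (Suc q)
  have "x (n + int (Suc q) * k) = x ((n + int q * k) + k)" by (simp add: algebra_simps)
  also have "\<dots> = x (n + int q * k) + t" using assms by blast
  finally show ?case using Suc by (simp add: algebra_simps)
qed

lemma per_int:
  assumes "\<forall>n. x (n + k) = x n + (t::real)"
  shows "x (n + q * k) = x n + real_of_int q * t"
proof (cases "q \<ge> 0")
  case True
  then obtain p where "q = int p" by (metis nonneg_eq_int)
  then show ?thesis using per_nat[OF assms, of n p] by simp
next
  case False
  define p where "p = nat (-q)"
  have p: "q = - int p" using False unfolding p_def by simp
  have "x ((n + q*k) + int p * k) = x (n + q*k) + real p * t" using per_nat[OF assms] by blast
  moreover have "(n + q*k) + int p * k = n" using p by (simp add: algebra_simps)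
  ultimately show ?thesis using p by simp
qed

theorem mainTheorem2:
  fixes F :: "real \<Rightarrow> real" and x :: "int \<Rightarrow> real" and k :: int and t :: real
  assumes "force_law F"
    and "equilibrium_configuration F x"
    and "k \<ge> 1" and "t > 0"
    and "\<forall>n. x (n + k) = x n + t"
  shows "trivial_configuration x"
proof -
  have Fpos: "\<And>d. d > 0 \<Longrightarrow> F d > 0" and Fdec: "\<And>d e. 0 < d \<Longrightarrow> d < e \<Longrightarrow> F e < F d"
    using assms(1) unfolding force_law_def by auto
  have smx: "strict_mono x" and eq: "\<And>n. in_equilibrium F x n"
    using assms(2) unfolding equilibrium_configuration_def configuration_def by auto
  define c where "c = t / real_of_int k"
  have kpos: "real_of_int k > 0" using assms(3) by simp
  define y where "y m = x m - real_of_int m * c" for m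
  have yper: "y m = y (m mod k)" for m
  proof -
    have "x (m mod k + (m div k) * k) = x (m mod k) + real_of_int (m div k) * t"
      using per_int[OF assms(5)] by blast
    moreover have "m mod k + (m div k) * k = m" by simp
    moreover have "real_of_int m = real_of_int (m mod k) + real_of_int (m div k) * real_of_int k"
      by (metis add.commute div_mult_mod_eq mult.commute of_int_add of_int_mult)
    moreover have "c * real_of_int k = t"
      unfolding c_def using kpos by simp
    ultimately show ?thesis unfolding y_def by (simp add: algebra_simps)
  qed
  have fin: "finite (y ` {0..<k})" "y ` {0..<k} \<noteq> {}" using assms(3) by auto
  obtain n where n: "n \<in> {0..<k}" "y n = Max (y ` {0..<k})"
    using Max_in[OF fin] by auto
  have ymax: "y m \<le> y n" for m
  proof -
    have "m mod k \<in> {0..<k}" using assms(3) by simp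
    then show ?thesis using yper[of m] n(2) Max_ge[OF fin(1)] by auto
  qed
  have cpos: "c > 0" unfolding c_def using assms(4) kpos by simp
  define A where "A = {n<..}"
  define f where "f m = F (x m - x n)" for m
  define g where "g m = F (x n - x (2*n - m))" for m
  have bij: "bij_betw (\<lambda>m. 2*n - m) A {..<n}"
    unfolding A_def by (rule bij_betwI[where g="\<lambda>m. 2*n - m"]) auto
  have e1: "(\<lambda>m. F (x n - x m)) summable_on {..<n}"
    "(\<lambda>m. F (x m - x n)) summable_on {n<..}"
    "(\<Sum>\<^sub>\<infinity>m\<in>{..<n}. F (x n - x m)) = (\<Sum>\<^sub>\<infinity>m\<in>{n<..}. F (x m - x n))"
    using eq[of n] unfolding in_equilibrium_def by auto
  have gs: "g summable_on A" unfolding g_def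
    using summable_on_reindex_bij_betw[OF bij, of "\<lambda>m. F (x n - x m)"] e1(1) by simp
  have fs: "f summable_on A" unfolding f_def A_def using e1(2) .
  have sumeq: "infsum g A = infsum f A" unfolding g_def f_def
    using infsum_reindex_bij_betw[OF bij, of "\<lambda>m. F (x n - x m)"] e1(3) by (simp add: A_def)
  have key: "x m - x n = real_of_int (m - n) * c \<and> x n - x (2*n - m) = real_of_int (m - n) * c"
    if mA: "m \<in> A" for m
  proof -
    define d where "d = real_of_int (m - n) * c"
    have dpos: "d > 0" unfolding d_def using mA cpos by (simp add: A_def)
    have a_le: "x m - x n \<le> d" using ymax[of m] unfolding y_def d_def by (simp add: algebra_simps)
    have b_ge: "x n - x (2*n - m) \<ge> d" using ymax[of "2*n - m"] unfolding y_def d_def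
      by (simp add: algebra_simps)
    have apos: "x m - x n > 0" using smx mA unfolding A_def strict_mono_def by auto
    have Fle: "F v \<le> F u" if "0 < u" "u \<le> v" for u v
      using Fdec[of u v] that by (cases "u = v") auto
    have gf: "g j \<le> f j" if "j \<in> A" for j
    proof -
      define dj where "dj = real_of_int (j - n) * c"
      have "x j - x n \<le> dj" using ymax[of j] unfolding y_def dj_def by (simp add: algebra_simps)
      moreover have "x n - x (2*n - j) \<ge> dj" using ymax[of "2*n - j"] unfolding y_def dj_def
        by (simp add: algebra_simps)
      moreover have "x j - x n > 0" using smx that unfolding A_def strict_mono_def by auto
      moreover have "dj > 0" unfolding dj_def using that cpos by (simp add: A_def)
      ultimately have "F (x n - x (2*n - j)) \<le> F dj" "F dj \<le> F (x j - x n)"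
        using Fle[of dj "x n - x (2*n - j)"] Fle[of "x j - x n" dj] by auto
      then show ?thesis unfolding f_def g_def by simp
    qed
    have nolt: "\<not> g m < f m"
    proof
      assume "g m < f m"
      then have "infsum g A < infsum f A"
        using has_sum_strict_mono[OF has_sum_infsum[OF gs] has_sum_infsum[OF fs] gf mA] by blast
      then show False using sumeq by simp
    qed
    have Fa: "F (x m - x n) \<ge> F d" using Fle[OF apos a_le] .
    have Fb: "F d \<ge> F (x n - x (2*n - m))" using Fle[OF dpos b_ge] .
    have same: "F (x m - x n) = F (x n - x (2*n - m))" using nolt gf[OF mA] unfolding f_def g_def by auto
    have "x m - x n = d"
    proof (rule ccontr)
      assume "x m - x n \<noteq> d"
      then have "x m - x n < d" using a_le by simp
      then have "F d < F (x m - x n)" using Fdec apos by blast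
      then show False using same Fb by simp
    qed
    moreover have "x n - x (2*n - m) = d"
    proof (rule ccontr)
      assume "x n - x (2*n - m) \<noteq> d"
      then have "d < x n - x (2*n - m)" using b_ge by simp
      then have "F (x n - x (2*n - m)) < F d" using Fdec dpos by blast
      then show False using same Fa by simp
    qed
    ultimately show ?thesis unfolding d_def by simp
  qed
  have lin: "x m = x n + real_of_int (m - n) * c" for m
  proof (cases "m > n")
    case True
    then show ?thesis using key[of m] by (simp add: A_def)
  next
    case False
    show ?thesis
    proof (cases "m = n")
      case True then show ?thesis by simp
    next
      case False
      with \<open>\<not> m > n\<close> have "2*n - m \<in> A" by (simp add: A_def)
      then have "x n - x (2*n - (2*n - m)) = real_of_int (2*n - m - n) * c" using key by blast
      then show ?thesis by (simp add: algebra_simps)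
    qed
  qed
  show ?thesis unfolding trivial_configuration_def
  proof (intro exI allI)
    fix m
    have "x (m + 1) = x n + real_of_int (m + 1 - n) * c" "x m = x n + real_of_int (m - n) * c"
      using lin by blast+
    then show "x (m + 1) - x m = c" by (simp add: algebra_simps)
  qed
qed

end
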